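(* Let $\{I_x\}_{x\in(0,1]}$ be a family of nonempty half-open intervals of the form $I_x=(y_x,x]\subset(0,1]$ (so $0\le y_x<x$). Then there exists a set $C\subset(0,1]$ such that $\bigcup_{x\in C}I_x=(0,1]$ and the intervals $I_y$, $I_z$ are disjoint whenever $y,z\in C$, $y\ne z$. *)

theory Defs
  imports Complex_Main
begin

end

theory Submission
  imports Defs
begin

theorem mainTheorem11:
  fixes y :: "real \<Rightarrow> real"
  assumes "\<And>x. x \<in> {0<..1} \<Longrightarrow> 0 \<le> y x \<and> y x < x"
  shows "\<exists>C. C \<subseteq> {0<..1} \<and> (\<Union>x\<in>C. {y x<..x}) = {0<..1}
            \<and> (\<forall>a\<in>C. \<forall>b\<in>C. a \<noteq> b \<longrightarrow> {y a<..a} \<inter> {y b<..b} = {})"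
proof -
  define A where "A = {C. C \<subseteq> {0<..1::real} \<and>
     (\<forall>a\<in>C. \<forall>b\<in>C. a \<noteq> b \<longrightarrow> {y a<..a} \<inter> {y b<..b} = {}) \<and>
     (\<exists>t. 0 \<le> t \<and> t \<le> 1 \<and> (\<Union>x\<in>C. {y x<..x}) = {t<..1})}"
  have "\<forall>S\<in>chains A. \<Union>S \<in> A"
  proof
    fix S assume S: "S \<in> chains A"
    hence SA: "S \<subseteq> A" and ch: "\<forall>P\<in>S. \<forall>Q\<in>S. P \<subseteq> Q \<or> Q \<subseteq> P"
      by (auto simp: chains_def chain_subset_def)
    have 1: "\<Union>S \<subseteq> {0<..1}" using SA unfolding A_def by blast
    have 2: "\<forall>a\<in>\<Union>S. \<forall>b\<in>\<Union>S. a \<noteq> b \<longrightarrow> {y a<..a} \<inter> {y b<..b} = {}"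
    proof (intro ballI impI)
      fix a b assume "a \<in> \<Union>S" "b \<in> \<Union>S" "a \<noteq> b"
      then obtain P Q where PQ: "P \<in> S" "Q \<in> S" "a \<in> P" "b \<in> Q" by auto
      with ch have "(a \<in> P \<and> b \<in> P) \<or> (a \<in> Q \<and> b \<in> Q)" by blast
      moreover have "\<forall>a\<in>P. \<forall>b\<in>P. a \<noteq> b \<longrightarrow> {y a<..a} \<inter> {y b<..b} = {}"
      proof -
        have "P \<in> A" using PQ(1) SA by blast
        from CollectD[OF this[unfolded A_def]] show ?thesis by (rule conjunct1[OF conjunct2])
      qed
      moreover have "\<forall>a\<in>Q. \<forall>b\<in>Q. a \<noteq> b \<longrightarrow> {y a<..a} \<inter> {y b<..b} = {}"
      proof -
        have "Q \<in> A" using PQ(2) SA by blast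
        from CollectD[OF this[unfolded A_def]] show ?thesis by (rule conjunct1[OF conjunct2])
      qed
      ultimately show "{y a<..a} \<inter> {y b<..b} = {}" using \<open>a \<noteq> b\<close> by blast
    qed
    have 3: "\<exists>t. 0 \<le> t \<and> t \<le> 1 \<and> (\<Union>x\<in>\<Union>S. {y x<..x}) = {t<..1}"
    proof (cases "S = {}")
      case True thus ?thesis by (intro exI[of _ 1]) simp
    next
      case False
      define T where "T = {t. 0 \<le> t \<and> t \<le> 1 \<and> (\<exists>C\<in>S. (\<Union>x\<in>C. {y x<..x}) = {t<..1})}"
      obtain C0 where C0: "C0 \<in> S" using False by blast
      hence "C0 \<in> A" using SA by blast
      from conjunct2[OF conjunct2[OF CollectD[OF this[unfolded A_def]]]]
      obtain t0 where "0 \<le> t0 \<and> t0 \<le> 1 \<and> (\<Union>x\<in>C0. {y x<..x}) = {t0<..1}" by blast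
      hence "t0 \<in> T" unfolding T_def using C0 by blast
      hence Tne: "T \<noteq> {}" by blast
      have Tbd: "bdd_below T" unfolding T_def bdd_below_def by auto
      define t where "t = Inf T"
      have t0: "0 \<le> t" unfolding t_def using Tne by (intro cInf_greatest) (auto simp: T_def)
      obtain t' where "t' \<in> T" using Tne by auto
      have "t' \<le> 1" using \<open>t' \<in> T\<close> unfolding T_def by simp
      moreover have "t \<le> t'" unfolding t_def using \<open>t' \<in> T\<close> Tbd by (rule cInf_lower)
      ultimately have t1: "t \<le> 1" by linarith
      have "(\<Union>x\<in>\<Union>S. {y x<..x}) = {t<..1}"
      proof (intro set_eqI iffI)
        fix z assume "z \<in> (\<Union>x\<in>\<Union>S. {y x<..x})"
        then obtain C x where C: "C \<in> S" "x \<in> C" "z \<in> {y x<..x}" by auto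
        have "C \<in> A" using C SA by blast
        from conjunct2[OF conjunct2[OF CollectD[OF this[unfolded A_def]]]]
        obtain s where s: "0 \<le> s" "s \<le> 1" "(\<Union>x\<in>C. {y x<..x}) = {s<..1}" by blast
        have "s \<in> T" using s C unfolding T_def by blast
        hence "t \<le> s" unfolding t_def using Tbd by (intro cInf_lower)
        moreover have "z \<in> {s<..1}" using C s(3) by blast
        ultimately show "z \<in> {t<..1}" by auto
      next
        fix z assume z: "z \<in> {t<..1}"
        hence "Inf T < z" unfolding t_def by auto
        then obtain s where "s \<in> T" "s < z" using cInf_less_iff[OF Tne Tbd] by auto
        then obtain C where C: "C \<in> S" "(\<Union>x\<in>C. {y x<..x}) = {s<..1}" unfolding T_def by blast
        have "z \<in> {s<..1}" using z \<open>s < z\<close> by simp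
        hence "z \<in> (\<Union>x\<in>C. {y x<..x})" using C(2) by simp
        then obtain x where "x \<in> C" "z \<in> {y x<..x}" by blast
        thus "z \<in> (\<Union>x\<in>\<Union>S. {y x<..x})" using C(1) by blast
      qed
      with t0 t1 show ?thesis by (intro exI[of _ t]) simp
    qed
    show "\<Union>S \<in> A" unfolding A_def using 1 2 3 by (intro CollectI conjI)
  qed
  from Zorn_Lemma[OF this] obtain M where M: "M \<in> A" and max: "\<forall>X\<in>A. M \<subseteq> X \<longrightarrow> X = M"
    by blast
  from M obtain t where t: "0 \<le> t" "t \<le> 1" "(\<Union>x\<in>M. {y x<..x}) = {t<..1}"
    and Msub: "M \<subseteq> {0<..1}"
    and Mdis: "\<forall>a\<in>M. \<forall>b\<in>M. a \<noteq> b \<longrightarrow> {y a<..a} \<inter> {y b<..b} = {}"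
    unfolding A_def by blast
  have "t = 0"
  proof (rule ccontr)
    assume "t \<noteq> 0"
    hence tin: "t \<in> {0<..1}" using t by auto
    have yt: "0 \<le> y t" "y t < t" using assms[OF tin] by auto
    have tM: "t \<notin> M"
    proof
      assume "t \<in> M"
      hence "t \<in> (\<Union>x\<in>M. {y x<..x})" using yt by auto
      thus False using t(3) by auto
    qed
    let ?M = "insert t M"
    have "?M \<in> A"
      unfolding A_def
    proof (intro CollectI conjI)
      show "?M \<subseteq> {0<..1}" using Msub tin by auto
      show "\<forall>a\<in>?M. \<forall>b\<in>?M. a \<noteq> b \<longrightarrow> {y a<..a} \<inter> {y b<..b} = {}"
      proof (intro ballI impI)
        fix a b assume ab: "a \<in> ?M" "b \<in> ?M" "a \<noteq> b"
        have sub: "t \<le> y c" if "c \<in> M" for c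
        proof (rule ccontr)
          assume "\<not> t \<le> y c"
          have cin: "c \<in> {0<..1}" using that Msub by auto
          have "y c < c" using assms[OF cin] by simp
          have "min c t \<in> (\<Union>x\<in>M. {y x<..x})" using that \<open>y c < c\<close> \<open>\<not> t \<le> y c\<close> by auto
          thus False using t(3) by auto
        qed
        show "{y a<..a} \<inter> {y b<..b} = {}"
        proof (cases "a = t")
          case True
          with ab have "b \<in> M" by auto
          with sub[of b] True show ?thesis by auto
        next
          case False
          show ?thesis
          proof (cases "b = t")
            case True
            with ab False have "a \<in> M" by auto
            with sub[of a] True show ?thesis by auto
          next
            case False
            with \<open>a \<noteq> t\<close> ab Mdis show ?thesis by auto
          qed
        qed
      qed
      show "\<exists>s. 0 \<le> s \<and> s \<le> 1 \<and> (\<Union>x\<in>?M. {y x<..x}) = {s<..1}"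
      proof (intro exI[of _ "y t"] conjI)
        show "0 \<le> y t" "y t \<le> 1" using yt t by auto
        have "(\<Union>x\<in>?M. {y x<..x}) = {y t<..t} \<union> {t<..1}" using t(3) by simp
        also have "\<dots> = {y t<..1}" using yt t by (auto simp: ivl_disj_un)
        finally show "(\<Union>x\<in>?M. {y x<..x}) = {y t<..1}" .
      qed
    qed
    with max have "?M = M" by auto
    with tM show False by auto
  qed
  show ?thesis
  proof (intro exI[of _ M] conjI)
    show "M \<subseteq> {0<..1}" by (rule Msub)
    show "(\<Union>x\<in>M. {y x<..x}) = {0<..1}" using t(3) \<open>t = 0\<close> by simp
    show "\<forall>a\<in>M. \<forall>b\<in>M. a \<noteq> b \<longrightarrow> {y a<..a} \<inter> {y b<..b} = {}" by (rule Mdis)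
  qed
qed

end
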